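(* Let $\boldsymbol p=(p,0,r)\in\mathbb{Z}^3$ with $1\le p\le r$. Then $$A(\boldsymbol a;\boldsymbol p)=\frac{1}{(\gamma-\alpha)_{r-p}(\gamma-\beta)_r}\begin{pmatrix}\dfrac{(\gamma)_r\,\phi_{11}^{(r-1)}}{(\alpha+1)_{p-1}} & \dfrac{(\gamma+1)_{r-1}\,\phi_{12}^{(r-1)}}{(\alpha+1)_{p-1}}\\[3mm] \dfrac{(\gamma)_{r+1}\,\phi_{21}^{(r-1)}}{(\alpha+1)_p} & \dfrac{(\gamma+1)_r\,\phi_{22}^{(r)}}{(\alpha+1)_p}\end{pmatrix},$$ where each $\phi_{ij}^{(k)}=\phi_{ij}^{(k)}(\boldsymbol a;\boldsymbol p)$ is a polynomial in $\alpha,\beta,\gamma$ (with coefficients rational in $z$) of degree at most $k$ in the variables $(\alpha,\gamma)$. Moreover $$\det A(\boldsymbol a;\boldsymbol p)=\frac{z^{-r}(z-1)^{r-p}(\gamma)_r(\gamma+1)_r}{(\alpha+1)_p(\gamma-\alpha)_{r-p}(\gamma-\beta)_r}.$$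
   Context: Write $\boldsymbol a=(\alpha,\beta,\gamma)$, ${}_2F_1(\boldsymbol a;z)={}_2F_1(\alpha,\beta;\gamma;z)$, $\boldsymbol 1=(1,1,1)$. For $\boldsymbol p\in\mathbb{Z}^3$ let $r(\boldsymbol a;\boldsymbol p;z)$, $q(\boldsymbol a;\boldsymbol p;z)$ be the unique rational functions of $(\alpha,\beta,\gamma,z)$ with ${}_2F_1(\boldsymbol a+\boldsymbol p;z)=r(\boldsymbol a;\boldsymbol p;z)\,{}_2F_1(\boldsymbol a;z)+q(\boldsymbol a;\boldsymbol p;z)\,{}_2F_1(\boldsymbol a+\boldsymbol 1;z)$ (obtained from Gauss's contiguous relations). Set $A(\boldsymbol a;\boldsymbol p):=\begin{pmatrix}r(\boldsymbol a;\boldsymbol p;z)&q(\boldsymbol a;\boldsymbol p;z)\\ r(\boldsymbol a;\boldsymbol p+\boldsymbol 1;z)&q(\boldsymbol a;\boldsymbol p+\boldsymbol 1;z)\end{pmatrix}$, so that $(F(\boldsymbol a+\boldsymbol p),F(\boldsymbol a+\boldsymbol p+\boldsymbol 1))^t=A(\boldsymbol a;\boldsymbol p)(F(\boldsymbol a),F(\boldsymbol a+\boldsymbol 1))^t$ with $F={}_2F_1(\cdot;z)$. $(\alpha)_k$ is the Pochhammer symbol. *)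

theory Defs
  imports "HOL-Analysis.Analysis" "HOL-Computational_Algebra.Polynomial"
begin

text \<open>Gauss hypergeometric series 2F1(a,b;c;z) (convergent for |z| < 1 when c is not a
  nonpositive integer).\<close>
definition hyp2f1 :: "complex \<Rightarrow> complex \<Rightarrow> complex \<Rightarrow> complex \<Rightarrow> complex" where
  "hyp2f1 a b c z = (\<Sum>n. pochhammer a n * pochhammer b n / (pochhammer c n * fact n) * z ^ n)"

definition poly_form ::
  "nat \<Rightarrow> complex poly \<Rightarrow> (complex \<Rightarrow> complex \<Rightarrow> complex \<Rightarrow> complex \<Rightarrow> complex) \<Rightarrow> bool" where
  "poly_form k D phi \<longleftrightarrow> D \<noteq> 0 \<and>
     (\<exists>N P. \<forall>\<alpha> \<beta> \<gamma> z. phi \<alpha> \<beta> \<gamma> z =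
        (\<Sum>i\<le>k. \<Sum>j\<le>k - i. \<Sum>l\<le>N. poly (P i j l) z * \<alpha> ^ i * \<gamma> ^ j * \<beta> ^ l) / poly D z)"

end

theory Submission
  imports Defs
begin

definition hc :: "complex \<Rightarrow> complex \<Rightarrow> complex \<Rightarrow> nat \<Rightarrow> complex" where
  "hc a b c n = pochhammer a n * pochhammer b n / (pochhammer c n * fact n)"

lemma hyp2f1_hc: "hyp2f1 a b c z = (\<Sum>n. hc a b c n * z ^ n)"
  by (simp add: hyp2f1_def hc_def)

lemma npi_shift: "(c::complex) \<notin> \<int>\<^sub>\<le>\<^sub>0 \<Longrightarrow> c + of_nat k \<notin> \<int>\<^sub>\<le>\<^sub>0"
  using nonpos_Ints_diff_Nats[of "c + of_nat k" "of_nat k"] by auto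

lemma npi_shift1: "(c::complex) \<notin> \<int>\<^sub>\<le>\<^sub>0 \<Longrightarrow> c + 1 \<notin> \<int>\<^sub>\<le>\<^sub>0"
  using npi_shift[of c 1] by simp

lemma npi_nz: "(c::complex) \<notin> \<int>\<^sub>\<le>\<^sub>0 \<Longrightarrow> c + of_nat k \<noteq> 0"
  using plus_of_nat_eq_0_imp by blast

lemma npi_nz0: "(c::complex) \<notin> \<int>\<^sub>\<le>\<^sub>0 \<Longrightarrow> c \<noteq> 0"
  using npi_nz[of c 0] by simp

lemma npi_poch: "(c::complex) \<notin> \<int>\<^sub>\<le>\<^sub>0 \<Longrightarrow> pochhammer c n \<noteq> 0"
  by (auto simp: pochhammer_eq_0_iff)

lemma ratio_lim: "(\<lambda>n. ((x::complex) + of_nat n) / (y + of_nat n)) \<longlonglongrightarrow> 1"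
proof -
  have "(\<lambda>n. (x / of_nat n + 1) / (y / of_nat n + 1)) \<longlonglongrightarrow> (0 + 1) / (0 + 1)"
    by (intro tendsto_intros) auto
  moreover have "eventually (\<lambda>n. (x / of_nat n + 1) / (y / of_nat n + 1) = (x + of_nat n) / (y + of_nat n)) sequentially"
    using eventually_gt_at_top[of 0]
  proof eventually_elim
    case (elim n)
    have 1: "x / of_nat n + 1 = (x + of_nat n) / of_nat n" "y / of_nat n + 1 = (y + of_nat n) / of_nat n"
      using elim by (simp_all add: field_simps)
    have "of_nat n \<noteq> (0::complex)" using elim by simp
    then show ?case unfolding 1 by (simp add: divide_divide_times_eq)
  qed
  ultimately show ?thesis using Lim_transform_eventually by fastforce
qed

lemma hc_Suc: "hc a b c (Suc n) = hc a b c n * ((a + of_nat n) * (b + of_nat n) / ((c + of_nat n) * of_nat (Suc n)))"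
  unfolding hc_def by (simp add: pochhammer_Suc field_simps del: of_nat_Suc)

lemma hc_summable:
  assumes "c \<notin> \<int>\<^sub>\<le>\<^sub>0" "norm z < 1"
  shows "summable (\<lambda>n. hc a b c n * z ^ n)"
proof -
  define f where "f n = (a + of_nat n) * (b + of_nat n) / ((c + of_nat n) * of_nat (Suc n)) * z" for n
  have "(\<lambda>n. (a + of_nat n) / (1 + of_nat n) * ((b + of_nat n) / (c + of_nat n)) * z) \<longlonglongrightarrow> 1 * 1 * z"
    by (intro tendsto_intros ratio_lim)
  hence "f \<longlonglongrightarrow> z" unfolding f_def by (simp add: field_simps)
  hence "(\<lambda>n. norm (f n)) \<longlonglongrightarrow> norm z" by (rule tendsto_norm)
  moreover have "norm z < (1 + norm z) / 2" using assms by simp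
  ultimately have "eventually (\<lambda>n. norm (f n) < (1 + norm z) / 2) sequentially"
    by (rule order_tendstoD)
  then obtain N where N: "\<And>n. n \<ge> N \<Longrightarrow> norm (f n) < (1 + norm z) / 2"
    by (auto simp: eventually_sequentially)
  show ?thesis
  proof (rule summable_ratio_test[of "(1 + norm z) / 2" N])
    show "(1 + norm z) / 2 < 1" using assms by simp
    fix n assume "n \<ge> N"
    have "hc a b c (Suc n) * z ^ Suc n = (hc a b c n * z ^ n) * f n"
      by (simp add: hc_Suc f_def field_simps)
    hence "norm (hc a b c (Suc n) * z ^ Suc n) = norm (hc a b c n * z ^ n * f n)"
      by (rule arg_cong)
    also have "\<dots> = norm (hc a b c n * z ^ n) * norm (f n)" by (rule norm_mult)
    also have "\<dots> \<le> norm (hc a b c n * z ^ n) * ((1 + norm z) / 2)"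
      using N[OF \<open>n \<ge> N\<close>] by (intro mult_left_mono) auto
    finally show "norm (hc a b c (Suc n) * z ^ Suc n) \<le> (1 + norm z) / 2 * norm (hc a b c n * z ^ n)"
      by (simp add: mult.commute)
  qed
qed

definition sh :: "(nat \<Rightarrow> complex) \<Rightarrow> nat \<Rightarrow> complex" where
  "sh u n = (case n of 0 \<Rightarrow> 0 | Suc m \<Rightarrow> u m)"

lemma sh_0[simp]: "sh u 0 = 0" and sh_Suc[simp]: "sh u (Suc m) = u m"
  by (simp_all add: sh_def)

lemma sums_sh:
  assumes "(\<lambda>n. u n * z ^ n) sums s"
  shows "(\<lambda>n. sh u n * z ^ n) sums (z * s)"
proof -
  have "(\<lambda>n. z * (u n * z ^ n)) sums (z * s)" by (rule sums_mult[OF assms])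
  hence "(\<lambda>n. sh u (Suc n) * z ^ (Suc n)) sums (z * s)" by (simp add: mult_ac)
  thus ?thesis by (subst (asm) sums_Suc_iff) simp
qed

lemma series_identity:
  assumes su: "summable (\<lambda>n. u n * z ^ n)" and sv: "summable (\<lambda>n. v n * z ^ n)"
    and sw: "summable (\<lambda>n. w n * z ^ n)"
    and coef: "\<And>n. L0 * w n + L1 * sh w n = C0 * u n + C1 * sh u n + D0 * v n + D1 * sh v n"
  shows "L0 * (\<Sum>n. w n * z ^ n) + L1 * (z * (\<Sum>n. w n * z ^ n)) =
         C0 * (\<Sum>n. u n * z ^ n) + C1 * (z * (\<Sum>n. u n * z ^ n))
       + D0 * (\<Sum>n. v n * z ^ n) + D1 * (z * (\<Sum>n. v n * z ^ n))"
proof -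
  note U = summable_sums[OF su] and V = summable_sums[OF sv] and W = summable_sums[OF sw]
  have l: "(\<lambda>n. L0 * (w n * z ^ n) + L1 * (sh w n * z ^ n)) sums
     (L0 * (\<Sum>n. w n * z ^ n) + L1 * (z * (\<Sum>n. w n * z ^ n)))"
    by (intro sums_add sums_mult sums_sh W)
  have r: "(\<lambda>n. C0 * (u n * z ^ n) + C1 * (sh u n * z ^ n) + D0 * (v n * z ^ n) + D1 * (sh v n * z ^ n)) sums
     (C0 * (\<Sum>n. u n * z ^ n) + C1 * (z * (\<Sum>n. u n * z ^ n))
       + D0 * (\<Sum>n. v n * z ^ n) + D1 * (z * (\<Sum>n. v n * z ^ n)))"
    by (intro sums_add sums_mult sums_sh U V)
  have eq: "(\<lambda>n. L0 * (w n * z ^ n) + L1 * (sh w n * z ^ n)) =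
        (\<lambda>n. C0 * (u n * z ^ n) + C1 * (sh u n * z ^ n) + D0 * (v n * z ^ n) + D1 * (sh v n * z ^ n))"
  proof
    fix n
    have "(L0 * w n + L1 * sh w n) * z ^ n = (C0 * u n + C1 * sh u n + D0 * v n + D1 * sh v n) * z ^ n"
      by (simp only: coef)
    thus "L0 * (w n * z ^ n) + L1 * (sh w n * z ^ n) =
        C0 * (u n * z ^ n) + C1 * (sh u n * z ^ n) + D0 * (v n * z ^ n) + D1 * (sh v n * z ^ n)"
      by (simp add: distrib_right mult.assoc)
  qed
  from l[unfolded eq] r show ?thesis by (rule sums_unique2)
qed

lemma poch_up: "pochhammer (x::complex) (Suc m) = x * pochhammer (x + 1) m"
  by (rule pochhammer_rec)
lemma poch_up1: "pochhammer ((x::complex) + 1) (Suc m) = pochhammer (x + 1) m * (x + 1 + of_nat m)"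
  by (simp add: pochhammer_Suc)
lemma poch_2: "((x::complex) + 1) * pochhammer (x + 2) m = pochhammer (x + 1) m * (x + 1 + of_nat m)"
proof -
  have "pochhammer (x + 1) (Suc m) = (x + 1) * pochhammer (x + 1 + 1) m" by (rule pochhammer_rec)
  moreover have "pochhammer (x + 1) (Suc m) = pochhammer (x + 1) m * (x + 1 + of_nat m)" by (simp add: pochhammer_Suc)
  moreover have "x + 1 + 1 = x + 2" by simp
  ultimately show ?thesis by simp
qed

definition hB :: "complex \<Rightarrow> complex \<Rightarrow> complex \<Rightarrow> nat \<Rightarrow> complex" where
  "hB a b c m = pochhammer (a+1) m * pochhammer (b+1) m / (pochhammer (c+1) m * fact m)"

lemma hB_facts:
  assumes c: "c \<notin> \<int>\<^sub>\<le>\<^sub>0"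
  shows "hc a b c (Suc m) = a * b * hB a b c m / (c * (1 + of_nat m))"
    "hc a b (c+1) (Suc m) = a * b * hB a b c m / ((c + 1 + of_nat m) * (1 + of_nat m))"
    "hc (a+1) (b+1) (c+1) (Suc m) = hB a b c m * (a + 1 + of_nat m) * (b + 1 + of_nat m) / ((c + 1 + of_nat m) * (1 + of_nat m))"
    "hc (a+1) (b+1) (c+1) m = hB a b c m"
    "hc (a+1) (b+1) (c+2) m = hB a b c m * (c + 1) / (c + 1 + of_nat m)"
    "(a + 1) * hc (a+2) (b+1) (c+2) m = hB a b c m * (a + 1 + of_nat m) * (c + 1) / (c + 1 + of_nat m)"
    "hc (a+1) b (c+1) (Suc m) = b * hB a b c m * (a + 1 + of_nat m) / ((c + 1 + of_nat m) * (1 + of_nat m))"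
proof -
  have nz: "c \<noteq> 0" "pochhammer (c + 1) m \<noteq> 0" "c + 1 + of_nat m \<noteq> 0" "(fact m :: complex) \<noteq> 0"
    "(1 + of_nat m :: complex) \<noteq> 0" "c + 1 \<noteq> 0"
    using c npi_nz0 npi_poch[OF npi_shift1[OF c]] npi_nz[of c "Suc m"] npi_nz[of c 1]
    by (auto simp: add_ac) (metis of_nat_Suc of_nat_neq_0)
  have e: "pochhammer a (Suc m) = a * pochhammer (a+1) m" "pochhammer b (Suc m) = b * pochhammer (b+1) m"
     "pochhammer c (Suc m) = c * pochhammer (c+1) m"
     "pochhammer (a+1) (Suc m) = pochhammer (a+1) m * (a + 1 + of_nat m)"
     "pochhammer (b+1) (Suc m) = pochhammer (b+1) m * (b + 1 + of_nat m)"
     "pochhammer (c+1) (Suc m) = pochhammer (c+1) m * (c + 1 + of_nat m)"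
    by (simp_all only: poch_up[of a] poch_up[of b] poch_up[of c] poch_up1)
  have f: "(fact (Suc m) :: complex) = (1 + of_nat m) * fact m" by (simp add: fact_Suc)
  have c2: "pochhammer (c+2) m = pochhammer (c+1) m * (c + 1 + of_nat m) / (c + 1)"
    using poch_2[of c m] nz by (simp add: field_simps)
  show "hc a b c (Suc m) = a * b * hB a b c m / (c * (1 + of_nat m))"
    unfolding hc_def hB_def e f using nz by (simp add: field_simps)
  show "hc a b (c+1) (Suc m) = a * b * hB a b c m / ((c + 1 + of_nat m) * (1 + of_nat m))"
    unfolding hc_def hB_def e f using nz by (simp add: field_simps)
  show "hc (a+1) (b+1) (c+1) (Suc m) = hB a b c m * (a + 1 + of_nat m) * (b + 1 + of_nat m) / ((c + 1 + of_nat m) * (1 + of_nat m))"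
    unfolding hc_def hB_def e f using nz by (simp add: field_simps)
  show "hc (a+1) (b+1) (c+1) m = hB a b c m"
    unfolding hc_def hB_def by simp
  show "hc (a+1) (b+1) (c+2) m = hB a b c m * (c + 1) / (c + 1 + of_nat m)"
    unfolding hc_def hB_def c2 using nz by (simp add: field_simps)
  show "(a + 1) * hc (a+2) (b+1) (c+2) m = hB a b c m * (a + 1 + of_nat m) * (c + 1) / (c + 1 + of_nat m)"
  proof -
    have "(a + 1) * hc (a+2) (b+1) (c+2) m = ((a + 1) * pochhammer (a+2) m) * pochhammer (b+1) m / (pochhammer (c+2) m * fact m)"
      by (simp add: hc_def)
    also have "\<dots> = pochhammer (a + 1) m * (a + 1 + of_nat m) * pochhammer (b+1) m / (pochhammer (c+2) m * fact m)"
      by (simp only: poch_2)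
    finally show ?thesis unfolding hB_def c2 using nz by (simp add: field_simps)
  qed
  show "hc (a+1) b (c+1) (Suc m) = b * hB a b c m * (a + 1 + of_nat m) / ((c + 1 + of_nat m) * (1 + of_nat m))"
    unfolding hc_def hB_def e f using nz by (simp add: field_simps)
qed


lemma nz_facts:
  fixes c :: complex
  assumes c: "c \<notin> \<int>\<^sub>\<le>\<^sub>0"
  shows "c \<noteq> 0" "c + 1 + of_nat m \<noteq> 0" "(1 + of_nat m :: complex) \<noteq> 0" "c + 1 \<noteq> 0"
  using c npi_nz0 npi_nz[of c "Suc m"] npi_nz[of c 1]
  by (auto simp: add_ac) (metis of_nat_Suc of_nat_neq_0)

lemma coef_S1:
  assumes c: "c \<notin> \<int>\<^sub>\<le>\<^sub>0"
  shows "(c - a) * (c - b) * hc a b (c + 1) n + 0 * sh (hc a b (c + 1)) n =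
    c * (c - a - b) * hc a b c n + 0 * sh (hc a b c) n + a * b * hc (a + 1) (b + 1) (c + 1) n
    + (- a * b) * sh (hc (a + 1) (b + 1) (c + 1)) n"
proof (cases n)
  case 0 thus ?thesis by (simp add: hc_def algebra_simps)
next
  case (Suc m)
  show ?thesis unfolding Suc sh_Suc hB_facts[OF c, of a b m]
    using nz_facts(1,4)[OF c] nz_facts(2,3)[OF c, of m] by (simp add: divide_simps) (simp add: algebra_simps)
qed

lemma coef_S2:
  assumes c: "c \<notin> \<int>\<^sub>\<le>\<^sub>0"
  shows "0 * hc (a+1) (b+1) (c + 2) n + (c - a) * (c - b) * sh (hc (a+1) (b+1) (c + 2)) n =
    c * (c + 1) * hc a b c n + 0 * sh (hc a b c) n + (- c * (c + 1)) * hc (a + 1) (b + 1) (c + 1) n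
    + (c * (c + 1)) * sh (hc (a + 1) (b + 1) (c + 1)) n"
proof (cases n)
  case 0 thus ?thesis by (simp add: hc_def algebra_simps)
next
  case (Suc m)
  show ?thesis unfolding Suc sh_Suc hB_facts[OF c, of a b m]
    using nz_facts(1,4)[OF c] nz_facts(2,3)[OF c, of m] by (simp add: divide_simps) (simp add: algebra_simps)
qed

lemma coef_T1:
  assumes c: "c \<notin> \<int>\<^sub>\<le>\<^sub>0"
  shows "(c - b) * hc (a+1) b (c + 1) n + 0 * sh (hc (a+1) b (c + 1)) n =
    c * hc a b c n + 0 * sh (hc a b c) n + (- b) * hc (a + 1) (b + 1) (c + 1) n
    + b * sh (hc (a + 1) (b + 1) (c + 1)) n"
proof (cases n)
  case 0 thus ?thesis by (simp add: hc_def algebra_simps)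
next
  case (Suc m)
  show ?thesis unfolding Suc sh_Suc hB_facts[OF c, of a b m]
    using nz_facts(1,4)[OF c] nz_facts(2,3)[OF c, of m] by (simp add: divide_simps) (simp add: algebra_simps)
qed

lemma coef_T2:
  assumes c: "c \<notin> \<int>\<^sub>\<le>\<^sub>0"
  shows "0 * hc (a+2) (b+1) (c + 2) n + (a + 1) * (c - b) * sh (hc (a+2) (b+1) (c + 2)) n =
    (- c * (c + 1)) * hc a b c n + 0 * sh (hc a b c) n + ((c + 1) * c) * hc (a + 1) (b + 1) (c + 1) n
    + (- (c + 1) * b) * sh (hc (a + 1) (b + 1) (c + 1)) n"
proof (cases n)
  case 0 thus ?thesis by (simp add: hc_def algebra_simps)
next
  case (Suc m)
  have "(a + 1) * (c - b) * hc (a+2) (b+1) (c + 2) m = (c - b) * ((a + 1) * hc (a+2) (b+1) (c + 2) m)"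
    by (simp add: algebra_simps)
  also have "\<dots> = (c - b) * (hB a b c m * (a + 1 + of_nat m) * (c + 1) / (c + 1 + of_nat m))"
    by (simp only: hB_facts[OF c, of a b m])
  finally have T: "(a + 1) * (c - b) * hc (a+2) (b+1) (c + 2) m = (c - b) * (hB a b c m * (a + 1 + of_nat m) * (c + 1) / (c + 1 + of_nat m))" .
  show ?thesis unfolding Suc sh_Suc hB_facts[OF c, of a b m] T
    using nz_facts(1,4)[OF c] nz_facts(2,3)[OF c, of m] by (simp add: divide_simps) (simp add: algebra_simps)
qed

lemma summ: "summable (\<lambda>n. hc a b c n * z ^ n)" if "c \<notin> \<int>\<^sub>\<le>\<^sub>0" "norm z < 1" for a b c z
  using hc_summable that by blast

lemma npi2: "c \<notin> \<int>\<^sub>\<le>\<^sub>0 \<Longrightarrow> (c::complex) + 2 \<notin> \<int>\<^sub>\<le>\<^sub>0"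
  using npi_shift[of c 2] by simp

lemma step_S1:
  assumes c: "c \<notin> \<int>\<^sub>\<le>\<^sub>0" and z: "norm z < 1"
  shows "(c - a) * (c - b) * hyp2f1 a b (c + 1) z = c * (c - a - b) * hyp2f1 a b c z
     + a * b * hyp2f1 (a + 1) (b + 1) (c + 1) z - a * b * z * hyp2f1 (a + 1) (b + 1) (c + 1) z"
  using series_identity[OF summ[of c z a b, OF c z] summ[of "c+1" z "a+1" "b+1", OF npi_shift1[OF c] z] summ[of "c+1" z a b, OF npi_shift1[OF c] z], OF coef_S1[OF c]]
  unfolding hyp2f1_hc by (simp add: algebra_simps)

lemma step_S2:
  assumes c: "c \<notin> \<int>\<^sub>\<le>\<^sub>0" and z: "norm z < 1"
  shows "(c - a) * (c - b) * z * hyp2f1 (a + 1) (b + 1) (c + 2) z = c * (c + 1) * hyp2f1 a b c z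
     - c * (c + 1) * hyp2f1 (a + 1) (b + 1) (c + 1) z + c * (c + 1) * z * hyp2f1 (a + 1) (b + 1) (c + 1) z"
  using series_identity[OF summ[of c z a b, OF c z] summ[of "c+1" z "a+1" "b+1", OF npi_shift1[OF c] z] summ[of "c+2" z "a+1" "b+1", OF npi2[OF c] z], OF coef_S2[OF c]]
  unfolding hyp2f1_hc by (simp add: algebra_simps)

lemma step_T1:
  assumes c: "c \<notin> \<int>\<^sub>\<le>\<^sub>0" and z: "norm z < 1"
  shows "(c - b) * hyp2f1 (a + 1) b (c + 1) z = c * hyp2f1 a b c z
     - b * hyp2f1 (a + 1) (b + 1) (c + 1) z + b * z * hyp2f1 (a + 1) (b + 1) (c + 1) z"
  using series_identity[OF summ[of c z a b, OF c z] summ[of "c+1" z "a+1" "b+1", OF npi_shift1[OF c] z] summ[of "c+1" z "a+1" b, OF npi_shift1[OF c] z], OF coef_T1[OF c]]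
  unfolding hyp2f1_hc by (simp add: algebra_simps)

lemma step_T2:
  assumes c: "c \<notin> \<int>\<^sub>\<le>\<^sub>0" and z: "norm z < 1"
  shows "(a + 1) * (c - b) * z * hyp2f1 (a + 2) (b + 1) (c + 2) z = - c * (c + 1) * hyp2f1 a b c z
     + (c + 1) * c * hyp2f1 (a + 1) (b + 1) (c + 1) z - (c + 1) * b * z * hyp2f1 (a + 1) (b + 1) (c + 1) z"
  using series_identity[OF summ[of c z a b, OF c z] summ[of "c+1" z "a+1" "b+1", OF npi_shift1[OF c] z] summ[of "c+2" z "a+2" "b+1", OF npi2[OF c] z], OF coef_T2[OF c]]
  unfolding hyp2f1_hc by (simp add: algebra_simps)

datatype m2 = M2 (e11: complex) (e12: complex) (e21: complex) (e22: complex)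

definition mmul :: "m2 \<Rightarrow> m2 \<Rightarrow> m2" where
  "mmul A B = M2 (e11 A * e11 B + e12 A * e21 B) (e11 A * e12 B + e12 A * e22 B)
                 (e21 A * e11 B + e22 A * e21 B) (e21 A * e12 B + e22 A * e22 B)"

definition smat :: "nat \<Rightarrow> nat \<Rightarrow> complex \<Rightarrow> complex \<Rightarrow> complex \<Rightarrow> complex \<Rightarrow> m2" where
  "smat m k a b g z = (if k < m then
      M2 (z * (g + of_nat k - a - b)) (z * (1 - z) * a * b) 1 (- (g + of_nat k) * (1 - z))
    else M2 (z * (a + of_nat (k - m) + 1)) (z * b * (z - 1) * (a + of_nat (k - m) + 1)) (- 1)
            (g + of_nat k - b * z))"

definition den :: "nat \<Rightarrow> nat \<Rightarrow> complex \<Rightarrow> complex \<Rightarrow> complex \<Rightarrow> complex" where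
  "den m k a b g = (if k < m then (g + of_nat k - a) * (g + of_nat k - b)
     else (a + of_nat (k - m) + 1) * (g + of_nat k - b))"

primrec Pm :: "nat \<Rightarrow> nat \<Rightarrow> complex \<Rightarrow> complex \<Rightarrow> complex \<Rightarrow> complex \<Rightarrow> m2" where
  "Pm m 0 a b g z = M2 1 0 0 1"
| "Pm m (Suc n) a b g z = mmul (smat m n a b g z) (Pm m n a b g z)"

definition Dn :: "nat \<Rightarrow> nat \<Rightarrow> complex \<Rightarrow> complex \<Rightarrow> complex \<Rightarrow> complex" where
  "Dn m n a b g = (\<Prod>k<n. den m k a b g)"

lemma hstep:
  fixes a b g z :: complex and m k :: nat
  assumes g: "g \<notin> \<int>\<^sub>\<le>\<^sub>0" and z: "norm z < 1"
  defines "a' \<equiv> a + of_nat (k - m)" and "c \<equiv> g + of_nat k"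
  shows "z * den m k a b g * hyp2f1 (a + of_nat (Suc k - m)) b (g + of_nat (Suc k)) z
        = c * e11 (smat m k a b g z) * hyp2f1 a' b c z + e12 (smat m k a b g z) * hyp2f1 (a' + 1) (b + 1) (c + 1) z"
    and "z * den m k a b g * hyp2f1 (a + of_nat (Suc k - m) + 1) (b + 1) (g + of_nat (Suc k) + 1) z
        = c * (c + 1) * e21 (smat m k a b g z) * hyp2f1 a' b c z + (c + 1) * e22 (smat m k a b g z) * hyp2f1 (a' + 1) (b + 1) (c + 1) z"
proof -
  have c: "c \<notin> \<int>\<^sub>\<le>\<^sub>0" unfolding c_def by (rule npi_shift[OF g])
  have gc1: "g + of_nat (Suc k) = c + 1" and gc2: "g + of_nat (Suc k) + 1 = c + 2" unfolding c_def by simp_all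
  have "(z * den m k a b g * hyp2f1 (a + of_nat (Suc k - m)) b (g + of_nat (Suc k)) z
        = c * e11 (smat m k a b g z) * hyp2f1 a' b c z + e12 (smat m k a b g z) * hyp2f1 (a' + 1) (b + 1) (c + 1) z)
      \<and> (z * den m k a b g * hyp2f1 (a + of_nat (Suc k - m) + 1) (b + 1) (g + of_nat (Suc k) + 1) z
        = c * (c + 1) * e21 (smat m k a b g z) * hyp2f1 a' b c z + (c + 1) * e22 (smat m k a b g z) * hyp2f1 (a' + 1) (b + 1) (c + 1) z)"
  proof (cases "k < m")
    case True
    hence a: "a' = a" "a + of_nat (Suc k - m) = a" unfolding a'_def by simp_all
    have S1: "(c - a) * (c - b) * hyp2f1 a b (c + 1) z = c * (c - a - b) * hyp2f1 a b c z
     + a * b * hyp2f1 (a + 1) (b + 1) (c + 1) z - a * b * z * hyp2f1 (a + 1) (b + 1) (c + 1) z"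
      by (rule step_S1[OF c z])
    have S2: "(c - a) * (c - b) * z * hyp2f1 (a + 1) (b + 1) (c + 2) z = c * (c + 1) * hyp2f1 a b c z
     - c * (c + 1) * hyp2f1 (a + 1) (b + 1) (c + 1) z + c * (c + 1) * z * hyp2f1 (a + 1) (b + 1) (c + 1) z"
      by (rule step_S2[OF c z])
    have d: "den m k a b g = (c - a) * (c - b)" using True unfolding den_def c_def by simp
    have s: "smat m k a b g z = M2 (z * (c - a - b)) (z * (1 - z) * a * b) 1 (- c * (1 - z))"
      using True unfolding smat_def c_def by simp
    show ?thesis unfolding a gc1 gc2 d s m2.sel
      apply (intro conjI)
      subgoal using arg_cong[OF S1, of "\<lambda>x. z * x"] by (simp add: algebra_simps)
      subgoal using S2 by (simp add: algebra_simps)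
      done
  next
    case False
    hence a: "a + of_nat (Suc k - m) = a' + 1" unfolding a'_def by (simp add: Suc_diff_le)
    have a2: "a' + 1 + 1 = a' + 2" by simp
    have T1: "(c - b) * hyp2f1 (a' + 1) b (c + 1) z = c * hyp2f1 a' b c z
     - b * hyp2f1 (a' + 1) (b + 1) (c + 1) z + b * z * hyp2f1 (a' + 1) (b + 1) (c + 1) z"
      by (rule step_T1[OF c z])
    have T2: "(a' + 1) * (c - b) * z * hyp2f1 (a' + 2) (b + 1) (c + 2) z = - c * (c + 1) * hyp2f1 a' b c z
     + (c + 1) * c * hyp2f1 (a' + 1) (b + 1) (c + 1) z - (c + 1) * b * z * hyp2f1 (a' + 1) (b + 1) (c + 1) z"
      by (rule step_T2[OF c z])
    have d: "den m k a b g = (a' + 1) * (c - b)" using False unfolding den_def c_def a'_def by simp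
    have s: "smat m k a b g z = M2 (z * (a' + 1)) (z * b * (z - 1) * (a' + 1)) (- 1) (c - b * z)"
      using False unfolding smat_def c_def a'_def by simp
    show ?thesis unfolding a gc1 gc2 d s m2.sel a2
      apply (intro conjI)
      subgoal using arg_cong[OF T1, of "\<lambda>x. z * (a' + 1) * x"] by (simp add: algebra_simps)
      subgoal using T2 by (simp add: algebra_simps)
      done
  qed
  thus "z * den m k a b g * hyp2f1 (a + of_nat (Suc k - m)) b (g + of_nat (Suc k)) z
        = c * e11 (smat m k a b g z) * hyp2f1 a' b c z + e12 (smat m k a b g z) * hyp2f1 (a' + 1) (b + 1) (c + 1) z"
    "z * den m k a b g * hyp2f1 (a + of_nat (Suc k - m) + 1) (b + 1) (g + of_nat (Suc k) + 1) z
        = c * (c + 1) * e21 (smat m k a b g z) * hyp2f1 a' b c z + (c + 1) * e22 (smat m k a b g z) * hyp2f1 (a' + 1) (b + 1) (c + 1) z"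
    by blast+
qed


lemma alg_step:
  fixes z d Y1 Y2 c s11 s12 s21 s22 X1 X2 D zn Pg Pg1 Pg2 Q0 Q1 Q2 p11 p12 p21 p22 F G :: complex
  assumes h1: "z * d * Y1 = c * s11 * X1 + s12 * X2"
   and h2: "z * d * Y2 = c * (c + 1) * s21 * X1 + (c + 1) * s22 * X2"
   and i1: "D * zn * X1 = Pg * p11 * F + Q0 * p12 * G"
   and i2: "D * zn * X2 = Pg1 * p21 * F + Q1 * p22 * G"
   and q1: "Pg1 = Pg * c" and q2: "Pg2 = Pg1 * (c + 1)" and q3: "Q2 = Q1 * (c + 1)"
   and q4: "Q1 = Q0 * c \<or> p12 = 0"
  shows "(D * d) * (z * zn) * Y1 = Pg1 * (s11 * p11 + s12 * p21) * F + Q1 * (s11 * p12 + s12 * p22) * G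
    \<and> (D * d) * (z * zn) * Y2 = Pg2 * (s21 * p11 + s22 * p21) * F + Q2 * (s21 * p12 + s22 * p22) * G"
proof -
  have "(D * d) * (z * zn) * Y1 = (D * zn) * (z * d * Y1)" by (simp add: ac_simps)
  also have "\<dots> = (D * zn) * (c * s11 * X1 + s12 * X2)" by (simp only: h1)
  also have "\<dots> = c * s11 * (D * zn * X1) + s12 * (D * zn * X2)" by (simp add: algebra_simps)
  also have "\<dots> = c * s11 * (Pg * p11 * F + Q0 * p12 * G) + s12 * (Pg1 * p21 * F + Q1 * p22 * G)"
    by (simp only: i1 i2)
  finally have A: "(D * d) * (z * zn) * Y1 = c * s11 * (Pg * p11 * F + Q0 * p12 * G) + s12 * (Pg1 * p21 * F + Q1 * p22 * G)" .
  have "(D * d) * (z * zn) * Y2 = (D * zn) * (z * d * Y2)" by (simp add: ac_simps)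
  also have "\<dots> = (D * zn) * (c * (c + 1) * s21 * X1 + (c + 1) * s22 * X2)" by (simp only: h2)
  also have "\<dots> = c * (c + 1) * s21 * (D * zn * X1) + (c + 1) * s22 * (D * zn * X2)" by (simp add: algebra_simps)
  also have "\<dots> = c * (c + 1) * s21 * (Pg * p11 * F + Q0 * p12 * G) + (c + 1) * s22 * (Pg1 * p21 * F + Q1 * p22 * G)"
    by (simp only: i1 i2)
  finally have B: "(D * d) * (z * zn) * Y2 = c * (c + 1) * s21 * (Pg * p11 * F + Q0 * p12 * G) + (c + 1) * s22 * (Pg1 * p21 * F + Q1 * p22 * G)" .
  from q4 show ?thesis
  proof
    assume "Q1 = Q0 * c"
    thus ?thesis unfolding A B q1 q2 q3 by (simp add: algebra_simps)
  next
    assume "p12 = 0"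
    thus ?thesis unfolding A B q1 q2 q3 by (simp add: algebra_simps)
  qed
qed

lemma Dn_Suc: "Dn m (Suc n) a b g = Dn m n a b g * den m n a b g"
  by (simp add: Dn_def)

lemma Pm_Suc_sel:
  "e11 (Pm m (Suc n) a b g z) = e11 (smat m n a b g z) * e11 (Pm m n a b g z) + e12 (smat m n a b g z) * e21 (Pm m n a b g z)"
  "e12 (Pm m (Suc n) a b g z) = e11 (smat m n a b g z) * e12 (Pm m n a b g z) + e12 (smat m n a b g z) * e22 (Pm m n a b g z)"
  "e21 (Pm m (Suc n) a b g z) = e21 (smat m n a b g z) * e11 (Pm m n a b g z) + e22 (smat m n a b g z) * e21 (Pm m n a b g z)"
  "e22 (Pm m (Suc n) a b g z) = e21 (smat m n a b g z) * e12 (Pm m n a b g z) + e22 (smat m n a b g z) * e22 (Pm m n a b g z)"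
  by (simp_all add: mmul_def)

lemma inv:
  fixes a b g z :: complex and m n :: nat
  assumes g: "g \<notin> \<int>\<^sub>\<le>\<^sub>0" and z: "norm z < 1"
  shows "Dn m n a b g * z ^ n * hyp2f1 (a + of_nat (n - m)) b (g + of_nat n) z
      = pochhammer g n * e11 (Pm m n a b g z) * hyp2f1 a b g z
        + pochhammer (g + 1) (n - 1) * e12 (Pm m n a b g z) * hyp2f1 (a + 1) (b + 1) (g + 1) z
    \<and> Dn m n a b g * z ^ n * hyp2f1 (a + of_nat (n - m) + 1) (b + 1) (g + of_nat n + 1) z
      = pochhammer g (Suc n) * e21 (Pm m n a b g z) * hyp2f1 a b g z
        + pochhammer (g + 1) n * e22 (Pm m n a b g z) * hyp2f1 (a + 1) (b + 1) (g + 1) z"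
proof (induction n)
  case 0
  show ?case by (simp add: Dn_def)
next
  case (Suc n)
  note h = hstep[OF g z, where a=a and b=b and m=m and k=n]
  have q1: "pochhammer g (Suc n) = pochhammer g n * (g + of_nat n)" by (rule pochhammer_Suc)
  have q2: "pochhammer g (Suc (Suc n)) = pochhammer g (Suc n) * (g + of_nat n + 1)"
    by (simp add: pochhammer_Suc add_ac)
  have q3: "pochhammer (g + 1) (Suc n) = pochhammer (g + 1) n * (g + of_nat n + 1)"
    by (simp add: pochhammer_Suc add_ac)
  have q4: "pochhammer (g + 1) n = pochhammer (g + 1) (n - 1) * (g + of_nat n) \<or> e12 (Pm m n a b g z) = 0"
  proof (cases n)
    case 0 thus ?thesis by simp
  next
    case (Suc n') thus ?thesis by (simp add: pochhammer_Suc add_ac)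
  qed
  from alg_step[OF h(1) h(2) Suc.IH[THEN conjunct1] Suc.IH[THEN conjunct2] q1 q2 q3 q4]
  show ?case unfolding Pm_Suc_sel diff_Suc_1 Dn_Suc power_Suc .
qed

lemma d1: "i0 \<le> (k::nat) \<Longrightarrow> (\<Sum>i\<le>k. if i = i0 then B i else (0::complex)) = B i0"
  by (simp add: sum.delta)
lemma e1: "(\<Sum>l\<le>(N::nat). if P \<and> l = l0 then f l else (0::complex)) = (if P then (\<Sum>l\<le>N. if l = l0 then f l else 0) else 0)"
  by (cases P) simp_all

lemma delta3:
  fixes T :: "nat \<Rightarrow> nat \<Rightarrow> nat \<Rightarrow> complex"
  assumes "i0 + j0 \<le> k" "l0 \<le> N"
  shows "(\<Sum>i\<le>k. \<Sum>j\<le>k - i. \<Sum>l\<le>N. if i = i0 \<and> j = j0 \<and> l = l0 then T i j l else 0) = T i0 j0 l0"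
proof -
  have "(\<Sum>i\<le>k. \<Sum>j\<le>k - i. \<Sum>l\<le>N. if i = i0 \<and> j = j0 \<and> l = l0 then T i j l else 0)
      = (\<Sum>i\<le>k. if i = i0 then (\<Sum>j\<le>k - i. if j = j0 then (\<Sum>l\<le>N. if l = l0 then T i j l else 0) else 0) else 0)"
    by (simp only: conj_assoc[symmetric] e1)
  also have "\<dots> = (\<Sum>j\<le>k - i0. if j = j0 then (\<Sum>l\<le>N. if l = l0 then T i0 j l else 0) else 0)"
    by (rule d1) (use assms in simp)
  also have "\<dots> = (\<Sum>l\<le>N. if l = l0 then T i0 j0 l else 0)"
    by (rule d1) (use assms in simp)
  also have "\<dots> = T i0 j0 l0"
    by (rule d1) (use assms in simp)
  finally show ?thesis .
qed

definition lt :: "complex poly \<times> nat \<times> nat \<times> nat \<Rightarrow> complex \<Rightarrow> complex \<Rightarrow> complex \<Rightarrow> complex \<Rightarrow> complex" where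
  "lt x a b c z = poly (fst x) z * a ^ fst (snd x) * c ^ fst (snd (snd x)) * b ^ snd (snd (snd x))"

definition PL :: "nat \<Rightarrow> (complex \<Rightarrow> complex \<Rightarrow> complex \<Rightarrow> complex \<Rightarrow> complex) \<Rightarrow> bool" where
  "PL k f \<longleftrightarrow> (\<exists>xs. (\<forall>x\<in>set xs. fst (snd x) + fst (snd (snd x)) \<le> k) \<and>
      (\<forall>a b c z. f a b c z = (\<Sum>x\<leftarrow>xs. lt x a b c z)))"

lemma list_to_coef:
  "(\<forall>x\<in>set xs. fst (snd x) + fst (snd (snd x)) \<le> k \<and> snd (snd (snd x)) \<le> N) \<Longrightarrow>
   \<exists>P. \<forall>a b c z. (\<Sum>x\<leftarrow>xs. lt x a b c z) = (\<Sum>i\<le>k. \<Sum>j\<le>k - i. \<Sum>l\<le>N. poly (P i j l) z * a ^ i * c ^ j * b ^ l)"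
proof (induction xs)
  case Nil
  show ?case by (rule exI[of _ "\<lambda>_ _ _. 0"]) simp
next
  case (Cons x xs)
  then obtain P where P: "\<And>a b c z. (\<Sum>x\<leftarrow>xs. lt x a b c z) = (\<Sum>i\<le>k. \<Sum>j\<le>k - i. \<Sum>l\<le>N. poly (P i j l) z * a ^ i * c ^ j * b ^ l)"
    by auto
  obtain q i0 j0 l0 where x: "x = (q, i0, j0, l0)" by (cases x) auto
  have b: "i0 + j0 \<le> k" "l0 \<le> N" using Cons.prems x by auto
  define P' where "P' i j l = P i j l + (if i = i0 \<and> j = j0 \<and> l = l0 then q else 0)" for i j l
  show ?case
  proof (intro exI allI)
    fix a b c z :: complex
    have pw: "poly (P' i j l) z * a ^ i * c ^ j * b ^ l = poly (P i j l) z * a ^ i * c ^ j * b ^ l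
       + (if i = i0 \<and> j = j0 \<and> l = l0 then poly q z * a ^ i * c ^ j * b ^ l else 0)" for i j l
      unfolding P'_def by (simp add: algebra_simps)
    have "(\<Sum>i\<le>k. \<Sum>j\<le>k - i. \<Sum>l\<le>N. poly (P' i j l) z * a ^ i * c ^ j * b ^ l)
      = (\<Sum>i\<le>k. \<Sum>j\<le>k - i. \<Sum>l\<le>N. poly (P i j l) z * a ^ i * c ^ j * b ^ l)
        + (\<Sum>i\<le>k. \<Sum>j\<le>k - i. \<Sum>l\<le>N. if i = i0 \<and> j = j0 \<and> l = l0 then poly q z * a ^ i * c ^ j * b ^ l else 0)"
      unfolding pw by (simp add: sum.distrib)
    also have "\<dots> = (\<Sum>x\<leftarrow>xs. lt x a b c z) + poly q z * a ^ i0 * c ^ j0 * b ^ l0"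
      unfolding P by (subst delta3[OF b]) (rule refl)
    finally show "(\<Sum>x\<leftarrow>x # xs. lt x a b c z) = (\<Sum>i\<le>k. \<Sum>j\<le>k - i. \<Sum>l\<le>N. poly (P' i j l) z * a ^ i * c ^ j * b ^ l)"
      by (simp add: x lt_def)
  qed
qed

lemma PL_poly_form:
  assumes "PL k f"
  shows "poly_form k (monom 1 r) (\<lambda>a b c z. f a b c z / z ^ r)"
proof -
  obtain xs where xs: "\<forall>x\<in>set xs. fst (snd x) + fst (snd (snd x)) \<le> k"
    "\<And>a b c z. f a b c z = (\<Sum>x\<leftarrow>xs. lt x a b c z)"
    using assms unfolding PL_def by blast
  define N where "N = sum_list (map (\<lambda>x. snd (snd (snd x))) xs)"
  have "\<forall>x\<in>set xs. fst (snd x) + fst (snd (snd x)) \<le> k \<and> snd (snd (snd x)) \<le> N"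
    using xs(1) unfolding N_def by (fastforce intro!: member_le_sum_list rev_image_eqI)
  from list_to_coef[OF this] obtain P where
    P: "\<And>a b c z. (\<Sum>x\<leftarrow>xs. lt x a b c z) = (\<Sum>i\<le>k. \<Sum>j\<le>k - i. \<Sum>l\<le>N. poly (P i j l) z * a ^ i * c ^ j * b ^ l)"
    by blast
  show ?thesis unfolding poly_form_def
    by (intro conjI exI[of _ N] exI[of _ P] allI) (simp_all add: xs(2) P poly_monom)
qed

lemma pl_cong: "PL k f \<Longrightarrow> (\<And>a b c z. g a b c z = f a b c z) \<Longrightarrow> PL k g"
  unfolding PL_def by auto

lemma pl_zero: "PL k (\<lambda>a b c z. 0)"
  unfolding PL_def by (intro exI[of _ "[]"]) simp

lemma pl_one: "PL k (\<lambda>a b c z. 1)"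
  unfolding PL_def by (intro exI[of _ "[(1, 0, 0, 0)]"]) (simp add: lt_def)

lemma pl_add: "PL k f \<Longrightarrow> PL k g \<Longrightarrow> PL k (\<lambda>a b c z. f a b c z + g a b c z)"
  unfolding PL_def
proof (elim exE conjE)
  fix xs ys
  assume "\<forall>x\<in>set xs. fst (snd x) + fst (snd (snd x)) \<le> k" "\<forall>a b c z. f a b c z = (\<Sum>x\<leftarrow>xs. lt x a b c z)"
    "\<forall>x\<in>set ys. fst (snd x) + fst (snd (snd x)) \<le> k" "\<forall>a b c z. g a b c z = (\<Sum>x\<leftarrow>ys. lt x a b c z)"
  thus "\<exists>zs. (\<forall>x\<in>set zs. fst (snd x) + fst (snd (snd x)) \<le> k) \<and>
      (\<forall>a b c z. f a b c z + g a b c z = (\<Sum>x\<leftarrow>zs. lt x a b c z))"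
    by (intro exI[of _ "xs @ ys"]) auto
qed

lemma pl_mono: "PL k f \<Longrightarrow> k \<le> k' \<Longrightarrow> PL k' f"
  unfolding PL_def by (meson order_trans)

lemma pl_polyz: "PL k f \<Longrightarrow> PL k (\<lambda>a b c z. poly q z * f a b c z)"
  unfolding PL_def
proof (elim exE conjE)
  fix xs
  assume h: "\<forall>x\<in>set xs. fst (snd x) + fst (snd (snd x)) \<le> k" "\<forall>a b c z. f a b c z = (\<Sum>x\<leftarrow>xs. lt x a b c z)"
  have "(\<Sum>x\<leftarrow>map (\<lambda>x. (q * fst x, snd x)) xs. lt x a b c z) = poly q z * (\<Sum>x\<leftarrow>xs. lt x a b c z)" for a b c z
    by (induction xs) (simp_all add: lt_def algebra_simps)
  with h show "\<exists>zs. (\<forall>x\<in>set zs. fst (snd x) + fst (snd (snd x)) \<le> k) \<and>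
      (\<forall>a b c z. poly q z * f a b c z = (\<Sum>x\<leftarrow>zs. lt x a b c z))"
    by (intro exI[of _ "map (\<lambda>x. (q * fst x, snd x)) xs"]) auto
qed

lemma pl_a: "PL k f \<Longrightarrow> PL (Suc k) (\<lambda>a b c z. a * f a b c z)"
  unfolding PL_def
proof (elim exE conjE)
  fix xs
  assume h: "\<forall>x\<in>set xs. fst (snd x) + fst (snd (snd x)) \<le> k" "\<forall>a b c z. f a b c z = (\<Sum>x\<leftarrow>xs. lt x a b c z)"
  have "(\<Sum>x\<leftarrow>map (\<lambda>x. (fst x, Suc (fst (snd x)), snd (snd x))) xs. lt x a b c z) = a * (\<Sum>x\<leftarrow>xs. lt x a b c z)" for a b c z
    by (induction xs) (simp_all add: lt_def algebra_simps)
  with h show "\<exists>zs. (\<forall>x\<in>set zs. fst (snd x) + fst (snd (snd x)) \<le> Suc k) \<and>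
      (\<forall>a b c z. a * f a b c z = (\<Sum>x\<leftarrow>zs. lt x a b c z))"
    by (intro exI[of _ "map (\<lambda>x. (fst x, Suc (fst (snd x)), snd (snd x))) xs"]) auto
qed

lemma pl_c: "PL k f \<Longrightarrow> PL (Suc k) (\<lambda>a b c z. c * f a b c z)"
  unfolding PL_def
proof (elim exE conjE)
  fix xs
  assume h: "\<forall>x\<in>set xs. fst (snd x) + fst (snd (snd x)) \<le> k" "\<forall>a b c z. f a b c z = (\<Sum>x\<leftarrow>xs. lt x a b c z)"
  have "(\<Sum>x\<leftarrow>map (\<lambda>x. (fst x, fst (snd x), Suc (fst (snd (snd x))), snd (snd (snd x)))) xs. lt x a b c z) = c * (\<Sum>x\<leftarrow>xs. lt x a b c z)" for a b c z
    by (induction xs) (simp_all add: lt_def algebra_simps)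
  with h show "\<exists>zs. (\<forall>x\<in>set zs. fst (snd x) + fst (snd (snd x)) \<le> Suc k) \<and>
      (\<forall>a b c z. c * f a b c z = (\<Sum>x\<leftarrow>zs. lt x a b c z))"
    by (intro exI[of _ "map (\<lambda>x. (fst x, fst (snd x), Suc (fst (snd (snd x))), snd (snd (snd x)))) xs"]) auto
qed

lemma pl_b: "PL k f \<Longrightarrow> PL k (\<lambda>a b c z. b * f a b c z)"
  unfolding PL_def
proof (elim exE conjE)
  fix xs
  assume h: "\<forall>x\<in>set xs. fst (snd x) + fst (snd (snd x)) \<le> k" "\<forall>a b c z. f a b c z = (\<Sum>x\<leftarrow>xs. lt x a b c z)"
  have "(\<Sum>x\<leftarrow>map (\<lambda>x. (fst x, fst (snd x), fst (snd (snd x)), Suc (snd (snd (snd x))))) xs. lt x a b c z) = b * (\<Sum>x\<leftarrow>xs. lt x a b c z)" for a b c z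
    by (induction xs) (simp_all add: lt_def algebra_simps)
  with h show "\<exists>zs. (\<forall>x\<in>set zs. fst (snd x) + fst (snd (snd x)) \<le> k) \<and>
      (\<forall>a b c z. b * f a b c z = (\<Sum>x\<leftarrow>zs. lt x a b c z))"
    by (intro exI[of _ "map (\<lambda>x. (fst x, fst (snd x), fst (snd (snd x)), Suc (snd (snd (snd x))))) xs"]) auto
qed

definition AF :: "(complex \<Rightarrow> complex \<Rightarrow> complex \<Rightarrow> complex \<Rightarrow> complex) \<Rightarrow> bool" where
  "AF s \<longleftrightarrow> (\<exists>q0 q1 q2 q3. \<forall>a b c z. s a b c z = poly q0 z + poly q1 z * a + poly q2 z * c + poly q3 z * b)"
definition AF0 :: "(complex \<Rightarrow> complex \<Rightarrow> complex \<Rightarrow> complex \<Rightarrow> complex) \<Rightarrow> bool" where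
  "AF0 s \<longleftrightarrow> (\<exists>q0 q3. \<forall>a b c z. s a b c z = poly q0 z + poly q3 z * b)"
definition AFB :: "(complex \<Rightarrow> complex \<Rightarrow> complex \<Rightarrow> complex \<Rightarrow> complex) \<Rightarrow> bool" where
  "AFB s \<longleftrightarrow> (\<exists>s'. AF s' \<and> (\<forall>a b c z. s a b c z = b * s' a b c z))"

lemma pl_AF:
  assumes "AF s" "PL k f"
  shows "PL (Suc k) (\<lambda>a b c z. s a b c z * f a b c z)"
proof -
  obtain q0 q1 q2 q3 where s: "\<And>a b c z. s a b c z = poly q0 z + poly q1 z * a + poly q2 z * c + poly q3 z * b"
    using assms(1) unfolding AF_def by blast
  have "PL (Suc k) (\<lambda>a b c z. poly q0 z * f a b c z)" by (rule pl_mono[OF pl_polyz[OF assms(2)]]) simp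
  moreover have "PL (Suc k) (\<lambda>a b c z. poly q1 z * (a * f a b c z))" by (rule pl_polyz[OF pl_a[OF assms(2)]])
  moreover have "PL (Suc k) (\<lambda>a b c z. poly q2 z * (c * f a b c z))" by (rule pl_polyz[OF pl_c[OF assms(2)]])
  moreover have "PL (Suc k) (\<lambda>a b c z. poly q3 z * (b * f a b c z))" by (rule pl_mono[OF pl_polyz[OF pl_b[OF assms(2)]]]) simp
  ultimately have "PL (Suc k) (\<lambda>a b c z. poly q0 z * f a b c z + poly q1 z * (a * f a b c z) + poly q2 z * (c * f a b c z) + poly q3 z * (b * f a b c z))"
    by (intro pl_add)
  thus ?thesis by (rule pl_cong) (simp add: s algebra_simps)
qed

lemma pl_AF0:
  assumes "AF0 s" "PL k f"
  shows "PL k (\<lambda>a b c z. s a b c z * f a b c z)"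
proof -
  obtain q0 q3 where s: "\<And>a b c z. s a b c z = poly q0 z + poly q3 z * b"
    using assms(1) unfolding AF0_def by blast
  have "PL k (\<lambda>a b c z. poly q0 z * f a b c z + poly q3 z * (b * f a b c z))"
    by (intro pl_add pl_polyz pl_b assms(2))
  thus ?thesis by (rule pl_cong) (simp add: s algebra_simps)
qed

lemma pl_AFB:
  assumes "AFB s" "PL k f"
  shows "PL (Suc k) (\<lambda>a b c z. s a b c z * f a b c z)"
proof -
  obtain s' where s': "AF s'" "\<And>a b c z. s a b c z = b * s' a b c z"
    using assms(1) unfolding AFB_def by blast
  have "PL (Suc k) (\<lambda>a b c z. s' a b c z * (b * f a b c z))"
    by (rule pl_AF[OF s'(1) pl_b[OF assms(2)]])
  thus ?thesis by (rule pl_cong) (simp add: s'(2))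
qed

lemma AF_S11: "AF (\<lambda>a b g z. e11 (smat m n a b g z))"
  unfolding AF_def
proof (cases "n < m")
  case True
  show "\<exists>q0 q1 q2 q3. \<forall>a b c z. e11 (smat m n a b c z) = poly q0 z + poly q1 z * a + poly q2 z * c + poly q3 z * b"
    using True by (intro exI[of _ "[:0, of_nat n:]"] exI[of _ "[:0, -1:]"] exI[of _ "[:0, 1:]"] exI[of _ "[:0, -1:]"] allI)
      (simp add: smat_def algebra_simps)
next
  case False
  show "\<exists>q0 q1 q2 q3. \<forall>a b c z. e11 (smat m n a b c z) = poly q0 z + poly q1 z * a + poly q2 z * c + poly q3 z * b"
    using False by (intro exI[of _ "[:0, of_nat (n - m) + 1:]"] exI[of _ "[:0, 1:]"] exI[of _ "0"] exI[of _ "0"] allI)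
      (simp add: smat_def algebra_simps)
qed

lemma AF_S22: "AF (\<lambda>a b g z. e22 (smat m n a b g z))"
  unfolding AF_def
proof (cases "n < m")
  case True
  show "\<exists>q0 q1 q2 q3. \<forall>a b c z. e22 (smat m n a b c z) = poly q0 z + poly q1 z * a + poly q2 z * c + poly q3 z * b"
    using True by (intro exI[of _ "[:- of_nat n, of_nat n:]"] exI[of _ "0"] exI[of _ "[:-1, 1:]"] exI[of _ "0"] allI)
      (simp add: smat_def algebra_simps)
next
  case False
  show "\<exists>q0 q1 q2 q3. \<forall>a b c z. e22 (smat m n a b c z) = poly q0 z + poly q1 z * a + poly q2 z * c + poly q3 z * b"
    using False by (intro exI[of _ "[:of_nat n:]"] exI[of _ "0"] exI[of _ "[:1:]"] exI[of _ "[:0, -1:]"] allI)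
      (simp add: smat_def algebra_simps)
qed

lemma AF0_S21: "AF0 (\<lambda>a b g z. e21 (smat m n a b g z))"
  unfolding AF0_def
proof (cases "n < m")
  case True
  show "\<exists>q0 q3. \<forall>a b c z. e21 (smat m n a b c z) = poly q0 z + poly q3 z * b"
    using True by (intro exI[of _ "[:1:]"] exI[of _ "0"] allI) (simp add: smat_def)
next
  case False
  show "\<exists>q0 q3. \<forall>a b c z. e21 (smat m n a b c z) = poly q0 z + poly q3 z * b"
    using False by (intro exI[of _ "[:-1:]"] exI[of _ "0"] allI) (simp add: smat_def)
qed

lemma AFB_S12: "AFB (\<lambda>a b g z. e12 (smat m n a b g z))"
proof (cases "n < m")
  case True
  have "AF (\<lambda>a b g z. z * (1 - z) * a)"
    unfolding AF_def by (intro exI[of _ "0"] exI[of _ "[:0, 1, -1:]"] exI[of _ "0"] exI[of _ "0"] allI)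
      (simp add: algebra_simps power2_eq_square)
  thus ?thesis unfolding AFB_def using True by (intro exI[of _ "\<lambda>a b g z. z * (1 - z) * a"] conjI allI) (simp_all add: smat_def)
next
  case False
  have "AF (\<lambda>a b g z. z * (z - 1) * (a + of_nat (n - m) + 1))"
    unfolding AF_def by (intro exI[of _ "[:0, - (of_nat (n - m) + 1), of_nat (n - m) + 1:]"] exI[of _ "[:0, -1, 1:]"] exI[of _ "0"] exI[of _ "0"] allI)
      (simp add: algebra_simps)
  thus ?thesis unfolding AFB_def using False by (intro exI[of _ "\<lambda>a b g z. z * (z - 1) * (a + of_nat (n - m) + 1)"] conjI allI) (simp_all add: smat_def)
qed

lemma PL_Pm: "PL n (\<lambda>a b g z. e11 (Pm m n a b g z)) \<and> PL n (\<lambda>a b g z. e12 (Pm m n a b g z)) \<and>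
  PL (n - 1) (\<lambda>a b g z. e21 (Pm m n a b g z)) \<and> PL n (\<lambda>a b g z. e22 (Pm m n a b g z))"
proof (induction n)
  case 0
  show ?case by (simp add: pl_one pl_zero)
next
  case (Suc n)
  have h11: "PL n (\<lambda>a b g z. e11 (Pm m n a b g z))" and h12: "PL n (\<lambda>a b g z. e12 (Pm m n a b g z))"
   and h21: "PL (n - 1) (\<lambda>a b g z. e21 (Pm m n a b g z))" and h22: "PL n (\<lambda>a b g z. e22 (Pm m n a b g z))"
    using Suc.IH by blast+
  have A: "PL (Suc n) (\<lambda>a b g z. e11 (smat m n a b g z) * e11 (Pm m n a b g z))"
    by (rule pl_AF[OF AF_S11 h11])
  have B: "PL (Suc n) (\<lambda>a b g z. e12 (smat m n a b g z) * e21 (Pm m n a b g z))"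
    by (rule pl_mono[OF pl_AFB[OF AFB_S12 h21]]) simp
  have C: "PL (Suc n) (\<lambda>a b g z. e11 (smat m n a b g z) * e12 (Pm m n a b g z))"
    by (rule pl_AF[OF AF_S11 h12])
  have D: "PL (Suc n) (\<lambda>a b g z. e12 (smat m n a b g z) * e22 (Pm m n a b g z))"
    by (rule pl_AFB[OF AFB_S12 h22])
  have E: "PL n (\<lambda>a b g z. e21 (smat m n a b g z) * e11 (Pm m n a b g z))"
    by (rule pl_AF0[OF AF0_S21 h11])
  have F: "PL n (\<lambda>a b g z. e22 (smat m n a b g z) * e21 (Pm m n a b g z))"
  proof (cases n)
    case 0
    show ?thesis by (rule pl_cong[OF pl_zero]) (simp add: 0)
  next
    case (Suc n')
    show ?thesis using pl_AF[OF AF_S22 h21] Suc by simp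
  qed
  have G: "PL (Suc n) (\<lambda>a b g z. e21 (smat m n a b g z) * e12 (Pm m n a b g z))"
    by (rule pl_mono[OF pl_AF0[OF AF0_S21 h12]]) simp
  have H: "PL (Suc n) (\<lambda>a b g z. e22 (smat m n a b g z) * e22 (Pm m n a b g z))"
    by (rule pl_AF[OF AF_S22 h22])
  show ?case unfolding Pm_Suc_sel diff_Suc_1
    using pl_add[OF A B] pl_add[OF C D] pl_add[OF E F] pl_add[OF G H] by blast
qed

lemma Dn_closed: "Dn m n a b g = pochhammer (g - a) (min n m) * pochhammer (g - b) n * pochhammer (a + 1) (n - m)"
proof (induction n)
  case 0 show ?case by (simp add: Dn_def)
next
  case (Suc n)
  show ?case
  proof (cases "n < m")
    case True
    hence e: "min (Suc n) m = Suc (min n m)" "Suc n - m = n - m" "min n m = n" by auto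
    show ?thesis unfolding Dn_Suc Suc.IH e using True
      by (simp add: den_def pochhammer_Suc algebra_simps)
  next
    case False
    hence e: "min (Suc n) m = min n m" "Suc n - m = Suc (n - m)" by auto
    show ?thesis unfolding Dn_Suc Suc.IH e using False
      by (simp add: den_def pochhammer_Suc algebra_simps)
  qed
qed

definition mdet :: "m2 \<Rightarrow> complex" where "mdet A = e11 A * e22 A - e12 A * e21 A"

lemma det_Pm: "mdet (Pm m n a b g z) = z ^ n * (z - 1) ^ (min n m) * Dn m n a b g"
proof (induction n)
  case 0 show ?case by (simp add: Dn_def mdet_def)
next
  case (Suc n)
  have mm: "mdet (mmul A B) = mdet A * mdet B" for A B
    by (simp add: mdet_def mmul_def algebra_simps)
  have ds: "mdet (smat m n a b g z) = z * (z - 1) ^ (if n < m then 1 else 0) * den m n a b g"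
    by (simp add: mdet_def smat_def den_def algebra_simps)
  have e: "min (Suc n) m = min n m + (if n < m then 1 else 0)" by auto
  show ?case unfolding Pm.simps mm Suc.IH ds Dn_Suc e power_add by (simp add: algebra_simps)
qed

lemma final_alg:
  fixes A1 B1 C0 C1 ap zr zm Gr G1 Gs G1s f11 f12 f21 f22 X11 X12 X21 X22 H1 H2 F G :: complex
  assumes nz: "A1 \<noteq> 0" "B1 \<noteq> 0" "C0 \<noteq> 0" "ap \<noteq> 0" "zr \<noteq> 0"
  and c1: "C1 = C0 * ap"
  and x: "X11 = ap * zr * f11" "X12 = ap * zr * f12" "X21 = zr * f21" "X22 = zr * f22"
  and e1: "A1 * B1 * C1 * zr * H1 = Gr * X11 * F + G1 * X12 * G"
  and e2: "A1 * B1 * C1 * zr * H2 = Gs * X21 * F + G1s * X22 * G"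
  and dt: "X11 * X22 - X12 * X21 = zr * zm * (A1 * B1 * C1)"
  and pr: "Gs * G1 = Gr * G1s"
  shows "let s = 1 / (A1 * B1); m11 = s * (Gr * f11 / C0); m12 = s * (G1 * f12 / C0);
             m21 = s * (Gs * f21 / C1); m22 = s * (G1s * f22 / C1)
     in H1 = m11 * F + m12 * G \<and> H2 = m21 * F + m22 * G \<and>
        m11 * m22 - m12 * m21 = zm * Gr * G1s / (zr * C1 * A1 * B1)"
proof -
  have c1nz: "C1 \<noteq> 0" using nz c1 by simp
  have "(ap * zr) * (A1 * B1 * C0 * H1) = (ap * zr) * (Gr * f11 * F + G1 * f12 * G)"
    using e1 unfolding x c1 by (simp add: algebra_simps)
  hence h1: "A1 * B1 * C0 * H1 = Gr * f11 * F + G1 * f12 * G" using nz by simp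
  have "zr * (A1 * B1 * C1 * H2) = zr * (Gs * f21 * F + G1s * f22 * G)"
    using e2 unfolding x by (simp add: algebra_simps)
  hence h2: "A1 * B1 * C1 * H2 = Gs * f21 * F + G1s * f22 * G" using nz by simp
  have "(ap * zr * zr) * (f11 * f22 - f12 * f21) = (ap * zr * zr) * (zm * A1 * B1 * C0 / zr)"
    using dt nz unfolding x c1 by (simp add: algebra_simps)
  hence fd0: "zr * (f11 * f22 - f12 * f21) = zm * A1 * B1 * C0" using nz by (simp add: mult.assoc)
  hence fd: "f11 * f22 - f12 * f21 = zm * A1 * B1 * C0 / zr" using nz(5) by (simp add: eq_divide_eq mult.commute)
  have q1: "H1 = 1 / (A1 * B1) * (Gr * f11 / C0) * F + 1 / (A1 * B1) * (G1 * f12 / C0) * G"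
    using h1 nz by (simp add: field_simps)
  have q2: "H2 = 1 / (A1 * B1) * (Gs * f21 / C1) * F + 1 / (A1 * B1) * (G1s * f22 / C1) * G"
    using h2 nz c1nz by (simp add: field_simps)
  have "1 / (A1 * B1) * (Gr * f11 / C0) * (1 / (A1 * B1) * (G1s * f22 / C1)) - 1 / (A1 * B1) * (G1 * f12 / C0) * (1 / (A1 * B1) * (Gs * f21 / C1))
     = (Gr * G1s * (f11 * f22) - (Gs * G1) * (f12 * f21)) / (A1 * B1 * A1 * B1 * C0 * C1)"
    using nz c1nz by (simp add: field_simps)
  also have "\<dots> = Gr * G1s * (f11 * f22 - f12 * f21) / (A1 * B1 * A1 * B1 * C0 * C1)"
    unfolding pr by (simp add: algebra_simps)
  also have "\<dots> = zm * Gr * G1s / (zr * C1 * A1 * B1)"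
    unfolding fd using nz c1nz by (simp add: field_simps)
  finally have q3: "1 / (A1 * B1) * (Gr * f11 / C0) * (1 / (A1 * B1) * (G1s * f22 / C1)) - 1 / (A1 * B1) * (G1 * f12 / C0) * (1 / (A1 * B1) * (Gs * f21 / C1))
     = zm * Gr * G1s / (zr * C1 * A1 * B1)" .
  show ?thesis unfolding Let_def using q1 q2 q3 by blast
qed

theorem lemma3p3:
  fixes p r :: nat
  assumes "1 \<le> p" and "p \<le> r"
  shows "\<exists>\<phi>11 \<phi>12 \<phi>21 \<phi>22 D11 D12 D21 D22.
    poly_form (r - 1) D11 \<phi>11 \<and> poly_form (r - 1) D12 \<phi>12 \<and>
    poly_form (r - 1) D21 \<phi>21 \<and> poly_form r D22 \<phi>22 \<and>
    (\<forall>\<alpha> \<beta> \<gamma> z::complex.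
       \<gamma> \<notin> \<int>\<^sub>\<le>\<^sub>0 \<and> pochhammer (\<gamma> - \<alpha>) (r - p) \<noteq> 0 \<and> pochhammer (\<gamma> - \<beta>) r \<noteq> 0 \<and>
       pochhammer (\<alpha> + 1) p \<noteq> 0 \<and> 0 < norm z \<and> norm z < 1 \<and>
       poly D11 z \<noteq> 0 \<and> poly D12 z \<noteq> 0 \<and> poly D21 z \<noteq> 0 \<and> poly D22 z \<noteq> 0 \<longrightarrow>
       (let s = 1 / (pochhammer (\<gamma> - \<alpha>) (r - p) * pochhammer (\<gamma> - \<beta>) r);
            m11 = s * (pochhammer \<gamma> r * \<phi>11 \<alpha> \<beta> \<gamma> z / pochhammer (\<alpha> + 1) (p - 1));
            m12 = s * (pochhammer (\<gamma> + 1) (r - 1) * \<phi>12 \<alpha> \<beta> \<gamma> z / pochhammer (\<alpha> + 1) (p - 1));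
            m21 = s * (pochhammer \<gamma> (r + 1) * \<phi>21 \<alpha> \<beta> \<gamma> z / pochhammer (\<alpha> + 1) p);
            m22 = s * (pochhammer (\<gamma> + 1) r * \<phi>22 \<alpha> \<beta> \<gamma> z / pochhammer (\<alpha> + 1) p)
        in hyp2f1 (\<alpha> + of_nat p) \<beta> (\<gamma> + of_nat r) z
             = m11 * hyp2f1 \<alpha> \<beta> \<gamma> z + m12 * hyp2f1 (\<alpha> + 1) (\<beta> + 1) (\<gamma> + 1) z \<and>
           hyp2f1 (\<alpha> + of_nat p + 1) (\<beta> + 1) (\<gamma> + of_nat r + 1) z
             = m21 * hyp2f1 \<alpha> \<beta> \<gamma> z + m22 * hyp2f1 (\<alpha> + 1) (\<beta> + 1) (\<gamma> + 1) z \<and>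
           m11 * m22 - m12 * m21
             = (z - 1) ^ (r - p) * pochhammer \<gamma> r * pochhammer (\<gamma> + 1) r /
               (z ^ r * pochhammer (\<alpha> + 1) p * pochhammer (\<gamma> - \<alpha>) (r - p) * pochhammer (\<gamma> - \<beta>) r)))"
proof -
  define m where "m = r - p"
  have r1: "r = Suc (r - 1)" using assms by simp
  have rm: "r - m = p" "r - 1 - m = p - 1" "\<not> (r - 1 < m)" "min r m = r - p"
    using assms unfolding m_def by auto
  define f11 where "f11 = (\<lambda>a b g z. (z * e11 (Pm m (r - 1) a b g z) + z * b * (z - 1) * e21 (Pm m (r - 1) a b g z)) / z ^ r)"
  define f12 where "f12 = (\<lambda>a b g z. (z * e12 (Pm m (r - 1) a b g z) + z * b * (z - 1) * e22 (Pm m (r - 1) a b g z)) / z ^ r)"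
  define f21 where "f21 = (\<lambda>a b g z. e21 (Pm m r a b g z) / z ^ r)"
  define f22 where "f22 = (\<lambda>a b g z. e22 (Pm m r a b g z) / z ^ r)"
  have h: "PL (r - 1) (\<lambda>a b g z. e11 (Pm m (r - 1) a b g z))" "PL (r - 1) (\<lambda>a b g z. e12 (Pm m (r - 1) a b g z))"
    "PL (r - 1 - 1) (\<lambda>a b g z. e21 (Pm m (r - 1) a b g z))" "PL (r - 1) (\<lambda>a b g z. e22 (Pm m (r - 1) a b g z))"
    using PL_Pm[of "r - 1" m] by blast+
  have h': "PL (r - 1) (\<lambda>a b g z. e21 (Pm m r a b g z))" "PL r (\<lambda>a b g z. e22 (Pm m r a b g z))"
    using PL_Pm[of r m] by blast+
  have N1: "PL (r - 1) (\<lambda>a b g z. z * e11 (Pm m (r - 1) a b g z) + z * b * (z - 1) * e21 (Pm m (r - 1) a b g z))"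
  proof -
    have A: "PL (r - 1) (\<lambda>a b g z. poly [:0, 1:] z * e11 (Pm m (r - 1) a b g z))" by (rule pl_polyz[OF h(1)])
    have B: "PL (r - 1) (\<lambda>a b g z. poly [:0, -1, 1:] z * (b * e21 (Pm m (r - 1) a b g z)))"
      by (rule pl_mono[OF pl_polyz[OF pl_b[OF h(3)]]]) simp
    show ?thesis by (rule pl_cong[OF pl_add[OF A B]]) (simp add: algebra_simps)
  qed
  have N2: "PL (r - 1) (\<lambda>a b g z. z * e12 (Pm m (r - 1) a b g z) + z * b * (z - 1) * e22 (Pm m (r - 1) a b g z))"
  proof -
    have A: "PL (r - 1) (\<lambda>a b g z. poly [:0, 1:] z * e12 (Pm m (r - 1) a b g z))" by (rule pl_polyz[OF h(2)])
    have B: "PL (r - 1) (\<lambda>a b g z. poly [:0, -1, 1:] z * (b * e22 (Pm m (r - 1) a b g z)))"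
      by (rule pl_polyz[OF pl_b[OF h(4)]])
    show ?thesis by (rule pl_cong[OF pl_add[OF A B]]) (simp add: algebra_simps)
  qed
  have pf: "poly_form (r - 1) (monom 1 r) f11" "poly_form (r - 1) (monom 1 r) f12"
    "poly_form (r - 1) (monom 1 r) f21" "poly_form r (monom 1 r) f22"
    unfolding f11_def f12_def f21_def f22_def
    by (rule PL_poly_form[OF N1] PL_poly_form[OF N2] PL_poly_form[OF h'(1)] PL_poly_form[OF h'(2)])+
  show ?thesis
  proof (rule exI[of _ f11], rule exI[of _ f12], rule exI[of _ f21], rule exI[of _ f22],
      (rule exI[of _ "monom 1 r"])+, intro conjI pf allI impI)
    fix \<alpha> \<beta> \<gamma> z :: complex
    assume H: "\<gamma> \<notin> \<int>\<^sub>\<le>\<^sub>0 \<and> pochhammer (\<gamma> - \<alpha>) (r - p) \<noteq> 0 \<and> pochhammer (\<gamma> - \<beta>) r \<noteq> 0 \<and>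
       pochhammer (\<alpha> + 1) p \<noteq> 0 \<and> 0 < norm z \<and> norm z < 1 \<and>
       poly (monom 1 r) z \<noteq> 0 \<and> poly (monom 1 r) z \<noteq> 0 \<and> poly (monom 1 r) z \<noteq> 0 \<and> poly (monom 1 r) z \<noteq> 0"
    have g: "\<gamma> \<notin> \<int>\<^sub>\<le>\<^sub>0" and zl: "norm z < 1" and z0: "z \<noteq> 0" using H by auto
    have pA: "pochhammer (\<gamma> - \<alpha>) (r - p) \<noteq> 0" and pB: "pochhammer (\<gamma> - \<beta>) r \<noteq> 0"
      and pC: "pochhammer (\<alpha> + 1) p \<noteq> 0" using H by auto
    have p1: "p = Suc (p - 1)" using assms by simp
    have C: "pochhammer (\<alpha> + 1) p = pochhammer (\<alpha> + 1) (p - 1) * (\<alpha> + of_nat p)"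
    proof -
      have ps: "Suc (p - 1) = p" using assms by simp
      have "\<alpha> + 1 + of_nat (p - 1) = \<alpha> + of_nat p" using assms(1) by (simp add: of_nat_diff)
      thus ?thesis using pochhammer_Suc[of "\<alpha> + 1" "p - 1"] unfolding ps by simp
    qed
    have C0: "pochhammer (\<alpha> + 1) (p - 1) \<noteq> 0" and ap: "\<alpha> + of_nat p \<noteq> 0" using pC C by auto
    note I = inv[OF g zl, where a=\<alpha> and b=\<beta> and m=m and n=r]
    define P where "P = Pm m (r - 1) \<alpha> \<beta> \<gamma> z"
    have ee: "e11 (Pm m r \<alpha> \<beta> \<gamma> z) = (\<alpha> + of_nat p) * (z * e11 P + z * \<beta> * (z - 1) * e21 P)"
             "e12 (Pm m r \<alpha> \<beta> \<gamma> z) = (\<alpha> + of_nat p) * (z * e12 P + z * \<beta> * (z - 1) * e22 P)"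
    proof -
      have s: "smat m (r - 1) \<alpha> \<beta> \<gamma> z = M2 (z * (\<alpha> + of_nat p)) (z * \<beta> * (z - 1) * (\<alpha> + of_nat p)) (- 1) (\<gamma> + of_nat (r - 1) - \<beta> * z)"
        using rm(2,3) assms by (simp add: smat_def of_nat_diff add_ac)
      show "e11 (Pm m r \<alpha> \<beta> \<gamma> z) = (\<alpha> + of_nat p) * (z * e11 P + z * \<beta> * (z - 1) * e21 P)"
        by (subst r1) (simp only: Pm_Suc_sel s m2.sel P_def, simp add: algebra_simps)
      show "e12 (Pm m r \<alpha> \<beta> \<gamma> z) = (\<alpha> + of_nat p) * (z * e12 P + z * \<beta> * (z - 1) * e22 P)"
        by (subst r1) (simp only: Pm_Suc_sel s m2.sel P_def, simp add: algebra_simps)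
    qed
    have x: "e11 (Pm m r \<alpha> \<beta> \<gamma> z) = (\<alpha> + of_nat p) * z ^ r * f11 \<alpha> \<beta> \<gamma> z"
       "e12 (Pm m r \<alpha> \<beta> \<gamma> z) = (\<alpha> + of_nat p) * z ^ r * f12 \<alpha> \<beta> \<gamma> z"
       "e21 (Pm m r \<alpha> \<beta> \<gamma> z) = z ^ r * f21 \<alpha> \<beta> \<gamma> z"
       "e22 (Pm m r \<alpha> \<beta> \<gamma> z) = z ^ r * f22 \<alpha> \<beta> \<gamma> z"
      unfolding ee f11_def f12_def f21_def f22_def P_def using z0 by simp_all
    have D: "Dn m r \<alpha> \<beta> \<gamma> = pochhammer (\<gamma> - \<alpha>) (r - p) * pochhammer (\<gamma> - \<beta>) r * pochhammer (\<alpha> + 1) p"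
      unfolding Dn_closed rm by simp
    have dt: "e11 (Pm m r \<alpha> \<beta> \<gamma> z) * e22 (Pm m r \<alpha> \<beta> \<gamma> z) - e12 (Pm m r \<alpha> \<beta> \<gamma> z) * e21 (Pm m r \<alpha> \<beta> \<gamma> z)
        = z ^ r * (z - 1) ^ (r - p) * (pochhammer (\<gamma> - \<alpha>) (r - p) * pochhammer (\<gamma> - \<beta>) r * pochhammer (\<alpha> + 1) p)"
      using det_Pm[of m r \<alpha> \<beta> \<gamma> z] unfolding mdet_def D rm by simp
    have pr: "pochhammer \<gamma> (Suc r) * pochhammer (\<gamma> + 1) (r - 1) = pochhammer \<gamma> r * pochhammer (\<gamma> + 1) r"
    proof -
      have "pochhammer \<gamma> (Suc r) = \<gamma> * pochhammer (\<gamma> + 1) r" by (rule pochhammer_rec)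
      moreover have "pochhammer \<gamma> r = \<gamma> * pochhammer (\<gamma> + 1) (r - 1)" by (subst r1) (rule pochhammer_rec)
      ultimately show ?thesis by simp
    qed
    have e1: "pochhammer (\<gamma> - \<alpha>) (r - p) * pochhammer (\<gamma> - \<beta>) r * pochhammer (\<alpha> + 1) p * z ^ r * hyp2f1 (\<alpha> + of_nat p) \<beta> (\<gamma> + of_nat r) z
       = pochhammer \<gamma> r * e11 (Pm m r \<alpha> \<beta> \<gamma> z) * hyp2f1 \<alpha> \<beta> \<gamma> z + pochhammer (\<gamma> + 1) (r - 1) * e12 (Pm m r \<alpha> \<beta> \<gamma> z) * hyp2f1 (\<alpha> + 1) (\<beta> + 1) (\<gamma> + 1) z"
      using I[THEN conjunct1] unfolding D rm by simp
    have e2: "pochhammer (\<gamma> - \<alpha>) (r - p) * pochhammer (\<gamma> - \<beta>) r * pochhammer (\<alpha> + 1) p * z ^ r * hyp2f1 (\<alpha> + of_nat p + 1) (\<beta> + 1) (\<gamma> + of_nat r + 1) z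
       = pochhammer \<gamma> (r + 1) * e21 (Pm m r \<alpha> \<beta> \<gamma> z) * hyp2f1 \<alpha> \<beta> \<gamma> z + pochhammer (\<gamma> + 1) r * e22 (Pm m r \<alpha> \<beta> \<gamma> z) * hyp2f1 (\<alpha> + 1) (\<beta> + 1) (\<gamma> + 1) z"
      using I[THEN conjunct2] unfolding D rm by simp
    show "let s = 1 / (pochhammer (\<gamma> - \<alpha>) (r - p) * pochhammer (\<gamma> - \<beta>) r);
            m11 = s * (pochhammer \<gamma> r * f11 \<alpha> \<beta> \<gamma> z / pochhammer (\<alpha> + 1) (p - 1));
            m12 = s * (pochhammer (\<gamma> + 1) (r - 1) * f12 \<alpha> \<beta> \<gamma> z / pochhammer (\<alpha> + 1) (p - 1));
            m21 = s * (pochhammer \<gamma> (r + 1) * f21 \<alpha> \<beta> \<gamma> z / pochhammer (\<alpha> + 1) p);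
            m22 = s * (pochhammer (\<gamma> + 1) r * f22 \<alpha> \<beta> \<gamma> z / pochhammer (\<alpha> + 1) p)
        in hyp2f1 (\<alpha> + of_nat p) \<beta> (\<gamma> + of_nat r) z
             = m11 * hyp2f1 \<alpha> \<beta> \<gamma> z + m12 * hyp2f1 (\<alpha> + 1) (\<beta> + 1) (\<gamma> + 1) z \<and>
           hyp2f1 (\<alpha> + of_nat p + 1) (\<beta> + 1) (\<gamma> + of_nat r + 1) z
             = m21 * hyp2f1 \<alpha> \<beta> \<gamma> z + m22 * hyp2f1 (\<alpha> + 1) (\<beta> + 1) (\<gamma> + 1) z \<and>
           m11 * m22 - m12 * m21
             = (z - 1) ^ (r - p) * pochhammer \<gamma> r * pochhammer (\<gamma> + 1) r /
               (z ^ r * pochhammer (\<alpha> + 1) p * pochhammer (\<gamma> - \<alpha>) (r - p) * pochhammer (\<gamma> - \<beta>) r)"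
      by (rule final_alg[OF pA pB C0 ap _ C x e1 e2 dt]) (use z0 pr in simp_all)
  qed
qed

end
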